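(* Let $S$ be an instance of Max Lin-2 AA with $m$ equations in which no two equations have the same left-hand side, and let $\rho$ be the maximum over variables $z_i$ of the number of equations of $S$ containing $z_i$. Run the variant of Algorithm $\mathcal{A}$ in which, in step (2), an arbitrary variable still occurring in $S$ is chosen and marked. Then after the first $k-1$ iterations at most $2\rho(k-1)$ equations have been deleted from $S$ in total (by marking or by the combining rule). Consequently, if $2\rho(k-1)<m$, the algorithm marks $k$ equations.
   Context: Max Lin-2 AA: an instance is a system $S$ of $m$ linear equations over $\mathbb{F}_2$ in variables $z_1,\dots,z_n$, Equation $j$ being $\sum_{i\in\alpha_j} z_i=b_j$ with $\emptyset\neq\alpha_j\subseteq\{1,\dots,n\}$, $b_j\in\mathbb{F}_2$, positive integer weight $w_j$, and a nonnegative integer parameter $k$. Combining rule: if two equations $\sum_{i\in\alpha}z_i=b'$ (weight $w'$) and $\sum_{i\in\alpha}z_i=b''$ (weight $w''$) have the same left-hand side, replace them by one equation with that left-hand side: if $b'=b''$, with right-hand side $b'$ and weight $w'+w''$; otherwise, the one of larger weight, with new weight $|w'-w''|$; an equation of resulting weight $0$ is deleted. Algorithm $\mathcal{A}$: initially nothing is marked. While $S\neq\emptyset$ and fewer than $k$ equations are marked: (1) for each $i$ compute $\rho_i$, the number of equations currently in $S$ containing $z_i$; (2) choose a variable $z_l$ still occurring in $S$ with minimum $\rho_l$ and mark it; (3) choose an arbitrary equation $\sum_{i\in\alpha}z_i=b$ of $S$ containing $z_l$; (4) mark this equation and delete it from $S$; (5) replace every other equation $\sum_{i\in\alpha'}z_i=b'$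 of $S$ containing $z_l$ by $\sum_{i\in\alpha\triangle\alpha'}z_i=b+b'$ (keeping its weight), where $\triangle$ is symmetric difference; (6) apply the combining rule exhaustively (deleting equations of weight $0$). *)

theory Defs
  imports Main "HOL-Library.Multiset"
begin

text \<open>An equation  sum_{i in alpha} z_i = b  with weight w is the triple (alpha, b, w).
  Right-hand sides live in F_2, represented by bool (False = 0, True = 1; addition = xor).\<close>

type_synonym equation = "nat set \<times> bool \<times> nat"

definition lhs :: "equation \<Rightarrow> nat set" where "lhs e = fst e"
definition rhs :: "equation \<Rightarrow> bool" where "rhs e = fst (snd e)"
definition wt  :: "equation \<Rightarrow> nat"  where "wt e = snd (snd e)"

definition is_instance :: "equation multiset \<Rightarrow> bool" where
  "is_instance S \<longleftrightarrow> (\<forall>e \<in># S. finite (lhs e) \<and> lhs e \<noteq> {} \<and> wt e > 0)"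

definition distinct_lhs :: "equation multiset \<Rightarrow> bool" where
  "distinct_lhs S \<longleftrightarrow> (\<forall>\<alpha>. count (image_mset lhs S) \<alpha> \<le> 1)"

definition rho :: "equation multiset \<Rightarrow> nat" where
  "rho S = Max (range (\<lambda>i. size (filter_mset (\<lambda>e. i \<in> lhs e) S)))"

definition combine_pair :: "equation \<Rightarrow> equation \<Rightarrow> equation" where
  "combine_pair e1 e2 =
     (if rhs e1 = rhs e2 then (lhs e1, rhs e1, wt e1 + wt e2)
      else if wt e1 \<ge> wt e2 then (lhs e1, rhs e1, wt e1 - wt e2)
      else (lhs e1, rhs e2, wt e2 - wt e1))"

definition combine_step :: "equation multiset \<Rightarrow> equation multiset \<Rightarrow> bool" where
  "combine_step M M' \<longleftrightarrow> (\<exists>e1 e2. {#e1, e2#} \<subseteq># M \<and> lhs e1 = lhs e2 \<and>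
      M' = M - {#e1, e2#} +
           (if wt (combine_pair e1 e2) = 0 then {#} else {#combine_pair e1 e2#}))"

definition combine_exh :: "equation multiset \<Rightarrow> equation multiset \<Rightarrow> bool" where
  "combine_exh M M' \<longleftrightarrow> combine_step\<^sup>*\<^sup>* M M' \<and> (\<nexists>M''. combine_step M' M'')"

definition symdiff :: "nat set \<Rightarrow> nat set \<Rightarrow> nat set" where
  "symdiff A B = (A - B) \<union> (B - A)"

definition alg_step :: "equation multiset \<Rightarrow> equation multiset \<Rightarrow> bool" where
  "alg_step S S' \<longleftrightarrow> (\<exists>l e0. e0 \<in># S \<and> l \<in> lhs e0 \<and>
      combine_exh
        (image_mset (\<lambda>e. if l \<in> lhs e then (symdiff (lhs e0) (lhs e), rhs e0 \<noteq> rhs e, wt e) else e)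
           (S - {#e0#}))
        S')"

end

theory Submission
  imports Defs
begin


lemma count_image_filter: "count (image_mset f M) y = size (filter_mset (\<lambda>x. f x = y) M)"
  by (induction M) auto

lemma lhs_combine_pair[simp]: "lhs (combine_pair e1 e2) = lhs e1"
  by (simp add: combine_pair_def lhs_def)

lemma combine_step_lhs:
  assumes "combine_step M M'"
  shows "lhs ` set_mset M' \<subseteq> lhs ` set_mset M"
proof
  fix a assume "a \<in> lhs ` set_mset M'"
  then obtain x where x: "x \<in># M'" "a = lhs x" by auto
  from assms obtain e1 e2 where s: "{#e1, e2#} \<subseteq># M" "lhs e1 = lhs e2"
    and M': "M' = M - {#e1, e2#} +
           (if wt (combine_pair e1 e2) = 0 then {#} else {#combine_pair e1 e2#})"
    unfolding combine_step_def by blast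
  have e1: "e1 \<in># M" using s(1) by (meson insert_subset_eq_iff)
  show "a \<in> lhs ` set_mset M"
  proof (cases "x \<in># M - {#e1, e2#}")
    case True then show ?thesis using x by (auto dest: in_diffD)
  next
    case False
    then have "x = combine_pair e1 e2" using x M' by (auto split: if_splits)
    then show ?thesis using x e1 by auto
  qed
qed

lemma combine_rtrancl_lhs:
  assumes "combine_step\<^sup>*\<^sup>* M M'"
  shows "lhs ` set_mset M' \<subseteq> lhs ` set_mset M"
  using assms
proof induction
  case (step y z) show ?case using combine_step_lhs[OF step(2)] step.IH by (rule subset_trans)
qed simp

lemma combine_step_keep:
  assumes "combine_step M M'" "e \<in># M" "count (image_mset lhs M) (lhs e) \<le> 1"
  shows "e \<in># M' \<and> count (image_mset lhs M') (lhs e) \<le> 1"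
proof -
  from assms obtain e1 e2 where s: "{#e1, e2#} \<subseteq># M" "lhs e1 = lhs e2"
    and M': "M' = M - {#e1, e2#} +
           (if wt (combine_pair e1 e2) = 0 then {#} else {#combine_pair e1 e2#})"
    unfolding combine_step_def by blast
  have "image_mset lhs {#e1, e2#} \<subseteq># image_mset lhs M"
    using s(1) image_mset_subseteq_mono by blast
  hence "count (image_mset lhs {#e1, e2#}) (lhs e1) \<le> count (image_mset lhs M) (lhs e1)"
    by (meson mset_subset_eq_count)
  hence "2 \<le> count (image_mset lhs M) (lhs e1)" using s(2) by simp
  hence ne: "lhs e1 \<noteq> lhs e" using assms(3) by auto
  have "count (M - {#e1, e2#}) e = count M e" using ne s(2) by auto
  hence inM: "e \<in># M - {#e1, e2#}" using assms(2) by (metis count_eq_zero_iff)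
  have "image_mset lhs (M - {#e1, e2#}) = image_mset lhs M - image_mset lhs {#e1, e2#}"
    using s(1) by (rule image_mset_Diff)
  hence "count (image_mset lhs (M - {#e1, e2#})) (lhs e) \<le> count (image_mset lhs M) (lhs e)"
    by simp
  moreover have "count (image_mset lhs M') (lhs e) = count (image_mset lhs (M - {#e1, e2#})) (lhs e)"
    using M' ne by auto
  ultimately show ?thesis using inM M' assms(3) by auto
qed

lemma combine_rtrancl_keep:
  assumes "combine_step\<^sup>*\<^sup>* M M'" "e \<in># M" "count (image_mset lhs M) (lhs e) \<le> 1"
  shows "e \<in># M'"
proof -
  have "e \<in># M' \<and> count (image_mset lhs M') (lhs e) \<le> 1"
    using assms by induction (auto dest: combine_step_keep)
  thus ?thesis by simp
qed

lemma two_in_subset: "e1 \<in># M \<Longrightarrow> e2 \<in># M - {#e1#} \<Longrightarrow> {#e1, e2#} \<subseteq># M"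
  by (simp add: insert_subset_eq_iff)

lemma combine_exh_distinct:
  assumes "combine_exh M M'"
  shows "distinct_lhs M'"
  unfolding distinct_lhs_def
proof (rule ccontr)
  assume "\<not> (\<forall>\<alpha>. count (image_mset lhs M') \<alpha> \<le> 1)"
  then obtain a where "\<not> count (image_mset lhs M') a \<le> 1" by blast
  hence a: "count (image_mset lhs M') a \<ge> 2" by linarith
  then have "count (image_mset lhs M') a \<noteq> 0" by linarith
  then have "a \<in># image_mset lhs M'" by (simp only: count_eq_zero_iff not_not)
  then obtain e1 where e1: "e1 \<in># M'" "lhs e1 = a" by auto
  have "image_mset lhs (M' - {#e1#}) = image_mset lhs M' - {#a#}"
    using image_mset_Diff[of "{#e1#}" M' lhs] e1 by simp
  hence "count (image_mset lhs (M' - {#e1#})) a = count (image_mset lhs M') a - 1" by (simp only: count_diff count_single simp_thms if_True)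
  hence "count (image_mset lhs (M' - {#e1#})) a \<ge> 1" using a by linarith
  hence "count (image_mset lhs (M' - {#e1#})) a \<noteq> 0" by linarith
  hence "a \<in># image_mset lhs (M' - {#e1#})" by (simp only: count_eq_zero_iff not_not)
  then obtain e2 where e2: "e2 \<in># M' - {#e1#}" "lhs e2 = a" by auto
  have sub: "{#e1, e2#} \<subseteq># M'" by (rule two_in_subset[OF e1(1) e2(1)])
  have "combine_step M' (M' - {#e1, e2#} +
           (if wt (combine_pair e1 e2) = 0 then {#} else {#combine_pair e1 e2#}))"
    unfolding combine_step_def
    apply (rule exI[of _ e1], rule exI[of _ e2])
    apply (intro conjI[OF sub] conjI)
    using e1(2) e2(2) by simp_all
  thus False using assms unfolding combine_exh_def by blast
qed

lemma combine_exh_exists: "\<exists>M'. combine_exh M M'"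
proof (induction "size M" arbitrary: M rule: less_induct)
  case less
  show ?case
  proof (cases "\<exists>M''. combine_step M M''")
    case False then show ?thesis unfolding combine_exh_def by blast
  next
    case True
    then obtain M'' where st: "combine_step M M''" by blast
    then obtain e1 e2 where s: "{#e1, e2#} \<subseteq># M"
      and M': "M'' = M - {#e1, e2#} +
           (if wt (combine_pair e1 e2) = 0 then {#} else {#combine_pair e1 e2#})"
      unfolding combine_step_def by blast
    have "size (M - {#e1, e2#}) = size M - 2" using s by (simp add: size_Diff_submset)
    moreover have "size {#e1, e2#} \<le> size M" using s by (rule size_mset_mono)
    ultimately have "size M'' < size M" using M' by auto
    then obtain M3 where "combine_exh M'' M3" using less by blast
    then show ?thesis using st unfolding combine_exh_def
      using converse_rtranclp_into_rtranclp[of combine_step M M'' M3] by blast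
  qed
qed



definition alginv :: "nat set set \<Rightarrow> equation multiset \<Rightarrow> (nat set \<Rightarrow> nat set) \<Rightarrow> nat set \<Rightarrow> nat set set \<Rightarrow> bool" where
  "alginv A0 T red P W \<longleftrightarrow>
    (\<forall>e\<in>#T. lhs e \<in> red ` A0 \<and> lhs e \<noteq> {}) \<and> distinct_lhs T \<and>
    (\<forall>\<alpha>\<in>A0. red \<alpha> \<noteq> {} \<and> (\<forall>\<beta>\<in>A0. red \<beta> = red \<alpha> \<longrightarrow> \<beta> = \<alpha>) \<longrightarrow> red \<alpha> \<in> lhs ` set_mset T) \<and>
    (\<forall>\<alpha>\<in>A0. red \<alpha> \<inter> P = {}) \<and> (\<forall>\<alpha>\<in>A0. symdiff \<alpha> (red \<alpha>) \<in> W) \<and>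
    (\<forall>w\<in>W. w \<noteq> {} \<longrightarrow> w \<inter> P \<noteq> {}) \<and> (\<forall>x\<in>W. \<forall>y\<in>W. symdiff x y \<in> W) \<and> finite P"

lemma distinct_two:
  assumes "distinct_lhs T" "e0 \<in># T" "e \<in># T - {#e0#}"
  shows "lhs e \<noteq> lhs e0"
proof
  assume eq: "lhs e = lhs e0"
  have "{#e0, e#} \<subseteq># T" by (rule two_in_subset[OF assms(2,3)])
  hence "image_mset lhs {#e0, e#} \<subseteq># image_mset lhs T" by (rule image_mset_subseteq_mono)
  hence "count (image_mset lhs {#e0, e#}) (lhs e0) \<le> count (image_mset lhs T) (lhs e0)"
    by (meson mset_subset_eq_count)
  hence "2 \<le> count (image_mset lhs T) (lhs e0)" using eq by simp
  thus False using assms(1) unfolding distinct_lhs_def by (metis numeral_le_one_iff semiring_norm(69) order_trans)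
qed

lemma inv_step:
  assumes I: "alginv A0 T red P W" and st: "alg_step T T'"
  shows "\<exists>red' P' W'. alginv A0 T' red' P' W' \<and> card P' \<le> Suc (card P)"
proof -
  have Iall: "(\<forall>e\<in>#T. lhs e \<in> red ` A0 \<and> lhs e \<noteq> {}) \<and> distinct_lhs T \<and>
    (\<forall>\<alpha>\<in>A0. red \<alpha> \<noteq> {} \<and> (\<forall>\<beta>\<in>A0. red \<beta> = red \<alpha> \<longrightarrow> \<beta> = \<alpha>) \<longrightarrow> red \<alpha> \<in> lhs ` set_mset T) \<and>
    (\<forall>\<alpha>\<in>A0. red \<alpha> \<inter> P = {}) \<and> (\<forall>\<alpha>\<in>A0. symdiff \<alpha> (red \<alpha>) \<in> W) \<and>
    (\<forall>w\<in>W. w \<noteq> {} \<longrightarrow> w \<inter> P \<noteq> {}) \<and> (\<forall>x\<in>W. \<forall>y\<in>W. symdiff x y \<in> W) \<and> finite P"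
    using I unfolding alginv_def .
  note Iall' = Iall[THEN conjunct1] Iall[THEN conjunct2, THEN conjunct1]
    Iall[THEN conjunct2, THEN conjunct2, THEN conjunct1]
    Iall[THEN conjunct2, THEN conjunct2, THEN conjunct2, THEN conjunct1]
    Iall[THEN conjunct2, THEN conjunct2, THEN conjunct2, THEN conjunct2, THEN conjunct1]
    Iall[THEN conjunct2, THEN conjunct2, THEN conjunct2, THEN conjunct2, THEN conjunct2, THEN conjunct1]
    Iall[THEN conjunct2, THEN conjunct2, THEN conjunct2, THEN conjunct2, THEN conjunct2, THEN conjunct2, THEN conjunct1]
    Iall[THEN conjunct2, THEN conjunct2, THEN conjunct2, THEN conjunct2, THEN conjunct2, THEN conjunct2, THEN conjunct2]
  note Ia = Iall'(1) and Id = Iall'(2) and Ib = Iall'(3) and Ie = Iall'(4) and If = Iall'(5)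
    and Ig = Iall'(6) and Ih = Iall'(7) and Ifin = Iall'(8)
  from st obtain l e0 where e0: "e0 \<in># T" and l: "l \<in> lhs e0" and
    cx: "combine_exh
        (image_mset (\<lambda>e. if l \<in> lhs e then (symdiff (lhs e0) (lhs e), rhs e0 \<noteq> rhs e, wt e) else e)
           (T - {#e0#})) T'"
    unfolding alg_step_def by blast
  define L where "L = lhs e0"
  define g where "g = (\<lambda>e. if l \<in> lhs e then (symdiff (lhs e0) (lhs e), rhs e0 \<noteq> rhs e, wt e) else e)"
  define M where "M = image_mset g (T - {#e0#})"
  define red' where "red' = (\<lambda>\<alpha>. if l \<in> red \<alpha> then symdiff L (red \<alpha>) else red \<alpha>)"
  define P' where "P' = insert l P"
  define W' where "W' = W \<union> symdiff L ` W"
  have cxM: "combine_exh M T'" using cx unfolding M_def g_def .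
  have lg: "lhs (g e) = (if l \<in> lhs e then symdiff L (lhs e) else lhs e)" for e
    unfolding g_def L_def by (simp add: lhs_def)
  obtain \<alpha>0 where a0: "\<alpha>0 \<in> A0" "L = red \<alpha>0" using Ia e0 unfolding L_def by blast
  have LP: "L \<inter> P = {}" using Ie a0 by blast
  have lL: "l \<in> L" using l unfolding L_def .
  have red'_lhs: "lhs (g e) = red' \<beta>" if "lhs e = red \<beta>" for e \<beta>
    using that unfolding lg red'_def by simp
  have Ma: "\<forall>x\<in>#M. \<exists>\<beta>\<in>A0. lhs x = red' \<beta> \<and> lhs x \<noteq> {}"
  proof
    fix x assume "x \<in># M"
    then obtain e where e: "e \<in># T - {#e0#}" "x = g e" unfolding M_def by auto
    have eT: "e \<in># T" using e(1) by (rule in_diffD)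
    then obtain \<beta> where b: "\<beta> \<in> A0" "lhs e = red \<beta>" using Ia by blast
    have ne: "lhs e \<noteq> L" using distinct_two[OF Id e0 e(1)] unfolding L_def .
    have "lhs x \<noteq> {}"
    proof (cases "l \<in> lhs e")
      case True
      then show ?thesis using ne unfolding e(2) lg by (auto simp: symdiff_def)
    next
      case False
      then show ?thesis using Ia eT unfolding e(2) lg by simp
    qed
    then show "\<exists>\<beta>\<in>A0. lhs x = red' \<beta> \<and> lhs x \<noteq> {}" using b red'_lhs e(2) by blast
  qed
  have T'a: "\<forall>e\<in>#T'. lhs e \<in> red' ` A0 \<and> lhs e \<noteq> {}"
  proof
    fix e assume "e \<in># T'"
    hence "lhs e \<in> lhs ` set_mset M"
      using combine_rtrancl_lhs[of M T'] cxM unfolding combine_exh_def by blast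
    then obtain x where "x \<in># M" "lhs e = lhs x" by auto
    then show "lhs e \<in> red' ` A0 \<and> lhs e \<noteq> {}" using Ma by fastforce
  qed
  have T'd: "distinct_lhs T'" by (rule combine_exh_distinct[OF cxM])
  have T'e: "\<forall>\<alpha>\<in>A0. red' \<alpha> \<inter> P' = {}"
    using Ie LP lL unfolding red'_def P'_def by (auto simp: symdiff_def)
  have T'f: "\<forall>\<alpha>\<in>A0. symdiff \<alpha> (red' \<alpha>) \<in> W'"
  proof
    fix \<alpha> assume aA: "\<alpha> \<in> A0"
    show "symdiff \<alpha> (red' \<alpha>) \<in> W'"
    proof (cases "l \<in> red \<alpha>")
      case True
      have "symdiff \<alpha> (red' \<alpha>) = symdiff L (symdiff \<alpha> (red \<alpha>))"
        unfolding red'_def using True by (auto simp: symdiff_def)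
      then show ?thesis using If aA unfolding W'_def by auto
    next
      case False
      then show ?thesis using If aA unfolding W'_def red'_def by auto
    qed
  qed
  have T'g: "\<forall>w\<in>W'. w \<noteq> {} \<longrightarrow> w \<inter> P' \<noteq> {}"
  proof (intro ballI impI)
    fix w assume "w \<in> W'" "w \<noteq> {}"
    then consider "w \<in> W" | w0 where "w0 \<in> W" "w = symdiff L w0" unfolding W'_def by blast
    then show "w \<inter> P' \<noteq> {}"
    proof cases
      case 1 then show ?thesis using Ig \<open>w \<noteq> {}\<close> unfolding P'_def by blast
    next
      case (2 w0)
      show ?thesis
      proof (cases "w0 = {}")
        case True then show ?thesis using 2 lL unfolding P'_def by (auto simp: symdiff_def)
      next
        case False
        then obtain p where "p \<in> w0" "p \<in> P" using Ig 2(1) by blast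
        then show ?thesis using 2 LP unfolding P'_def by (auto simp: symdiff_def)
      qed
    qed
  qed
  have T'h: "\<forall>x\<in>W'. \<forall>y\<in>W'. symdiff x y \<in> W'"
  proof (intro ballI)
    fix x y assume x: "x \<in> W'" and y: "y \<in> W'"
    have e1: "symdiff (symdiff L a) (symdiff L b) = symdiff a b" for a b
      by (auto simp: symdiff_def)
    have e2: "symdiff a (symdiff L b) = symdiff L (symdiff a b)" for a b
      by (auto simp: symdiff_def)
    have e3: "symdiff (symdiff L a) b = symdiff L (symdiff a b)" for a b
      by (auto simp: symdiff_def)
    from x consider "x \<in> W" | x0 where "x0 \<in> W" "x = symdiff L x0" unfolding W'_def by blast
    then show "symdiff x y \<in> W'"
    proof cases
      case 1
      from y consider "y \<in> W" | y0 where "y0 \<in> W" "y = symdiff L y0" unfolding W'_def by blast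
      then show ?thesis
      proof cases
        case 1 then show ?thesis using Ih \<open>x \<in> W\<close> unfolding W'_def by blast
      next
        case (2 y0) then show ?thesis using Ih \<open>x \<in> W\<close> e2[of x y0] unfolding W'_def by auto
      qed
    next
      case (2 x0)
      note X = 2
      from y consider "y \<in> W" | y0 where "y0 \<in> W" "y = symdiff L y0" unfolding W'_def by blast
      then show ?thesis
      proof cases
        case 1 then show ?thesis using Ih X e3[of x0 y] unfolding W'_def by auto
      next
        case (2 y0) then show ?thesis using Ih X e1[of x0 y0] unfolding W'_def by auto
      qed
    qed
  qed
  have T'b: "\<forall>\<alpha>\<in>A0. red' \<alpha> \<noteq> {} \<and> (\<forall>\<beta>\<in>A0. red' \<beta> = red' \<alpha> \<longrightarrow> \<beta> = \<alpha>) \<longrightarrow> red' \<alpha> \<in> lhs ` set_mset T'"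
  proof (intro ballI impI)
    fix \<alpha> assume aA: "\<alpha> \<in> A0" and g1: "red' \<alpha> \<noteq> {} \<and> (\<forall>\<beta>\<in>A0. red' \<beta> = red' \<alpha> \<longrightarrow> \<beta> = \<alpha>)"
    have cong: "red' \<beta> = red' \<alpha>" if "red \<beta> = red \<alpha>" for \<beta>
      unfolding red'_def using that by simp
    have rne: "red \<alpha> \<noteq> {}"
    proof
      assume "red \<alpha> = {}"
      hence "red' \<alpha> = {}" unfolding red'_def by simp
      thus False using g1 by simp
    qed
    have sing: "\<forall>\<beta>\<in>A0. red \<beta> = red \<alpha> \<longrightarrow> \<beta> = \<alpha>" using g1 cong by blast
    have "red \<alpha> \<in> lhs ` set_mset T" using Ib aA rne sing by blast
    then obtain e where e: "e \<in># T" "lhs e = red \<alpha>" by (metis imageE)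
    have "e \<noteq> e0"
    proof
      assume "e = e0"
      hence "red \<alpha> = L" using e unfolding L_def by simp
      hence "red' \<alpha> = {}" unfolding red'_def using lL by (simp add: symdiff_def)
      thus False using g1 by simp
    qed
    hence eT: "e \<in># T - {#e0#}" using e(1) by (simp add: in_diff_count)
    have gM: "g e \<in># M" unfolding M_def using eT by simp
    have lge: "lhs (g e) = red' \<alpha>" using red'_lhs e(2) by blast
    have cnt: "count (image_mset lhs M) (lhs (g e)) \<le> 1"
    proof -
      have "filter_mset (\<lambda>x. lhs x = red' \<alpha>) M = image_mset g (filter_mset (\<lambda>x. lhs x = red \<alpha>) (T - {#e0#}))"
      proof -
        have "filter_mset (\<lambda>x. lhs x = red' \<alpha>) M = image_mset g (filter_mset (\<lambda>x. lhs (g x) = red' \<alpha>) (T - {#e0#}))"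
          unfolding M_def by (simp add: filter_mset_image_mset)
        also have "filter_mset (\<lambda>x. lhs (g x) = red' \<alpha>) (T - {#e0#}) = filter_mset (\<lambda>x. lhs x = red \<alpha>) (T - {#e0#})"
        proof (rule filter_mset_cong0)
          fix x assume "x \<in># T - {#e0#}"
          hence xT: "x \<in># T" by (rule in_diffD)
          then obtain \<beta> where b: "\<beta> \<in> A0" "lhs x = red \<beta>" using Ia by blast
          have "lhs (g x) = red' \<beta>" using red'_lhs b(2) by blast
          moreover have "red' \<beta> = red' \<alpha> \<longleftrightarrow> red \<beta> = red \<alpha>" using g1 b(1) cong by metis
          ultimately show "lhs (g x) = red' \<alpha> \<longleftrightarrow> lhs x = red \<alpha>" using b(2) by simp
        qed
        finally show ?thesis .
      qed
      hence "count (image_mset lhs M) (red' \<alpha>) = count (image_mset lhs (T - {#e0#})) (red \<alpha>)"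
        by (simp add: count_image_filter)
      also have "\<dots> \<le> count (image_mset lhs T) (red \<alpha>)"
        using e0 by (simp add: image_mset_Diff)
      also have "\<dots> \<le> 1" using Id unfolding distinct_lhs_def by blast
      finally show ?thesis using lge by simp
    qed
    have "g e \<in># T'"
      using combine_rtrancl_keep[OF _ gM cnt] cxM unfolding combine_exh_def by blast
    thus "red' \<alpha> \<in> lhs ` set_mset T'" using lge by force
  qed
  have fin': "finite P'" unfolding P'_def using Ifin by simp
  have "alginv A0 T' red' P' W'"
    unfolding alginv_def using T'a T'd T'b T'e T'f T'g T'h fin' by (intro conjI)
  moreover have "card P' \<le> Suc (card P)" unfolding P'_def by (simp add: card_insert_le_m1 Ifin card_insert_if)
  ultimately show ?thesis by (intro exI conjI)
qed



lemma card_set_mset_le: "card (set_mset M) \<le> size M"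
  by (induction M) (auto simp: card_insert_if)

lemma size_distinct: "(\<forall>x. count M x \<le> 1) \<Longrightarrow> size M = card (set_mset M)"
proof (induction M)
  case empty then show ?case by simp
next
  case (add x M)
  have "\<forall>y. count M y \<le> 1" using add.prems by (metis count_add_mset le_SucI order_trans le_refl count_add_mset)
  moreover have "x \<notin># M" using add.prems[rule_format, of x] by (simp add: count_eq_zero_iff[symmetric])
  ultimately show ?case using add.IH by simp
qed

lemma inv_init:
  assumes "is_instance S" "distinct_lhs S"
  shows "alginv (lhs ` set_mset S) S id {} {{}}"
  using assms unfolding alginv_def is_instance_def by (auto simp: symdiff_def)

lemma inv_iter:
  assumes "(alg_step ^^ j) S T" "is_instance S" "distinct_lhs S"
  shows "\<exists>red P W. alginv (lhs ` set_mset S) T red P W \<and> card P \<le> j"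
  using assms(1)
proof (induction j arbitrary: T)
  case 0
  then have "T = S" by simp
  then have "alginv (lhs ` set_mset S) T id {} {{}} \<and> card ({}::nat set) \<le> 0" using inv_init[OF assms(2,3)] by simp
  then show ?case by blast
next
  case (Suc j)
  then obtain U where U: "(alg_step ^^ j) S U" "alg_step U T" by (meson relpowp_Suc_E)
  then obtain red P W where "alginv (lhs ` set_mset S) U red P W" "card P \<le> j" using Suc.IH by blast
  then obtain red' P' W' where "alginv (lhs ` set_mset S) T red' P' W'" "card P' \<le> Suc (card P)"
    using inv_step U(2) by blast
  then show ?case using \<open>card P \<le> j\<close> by (intro exI[of _ red'] exI[of _ P'] exI[of _ W']) simp
qed

lemma count_bound:
  assumes I: "alginv A0 T red P W" and fin: "finite A0" and ne: "\<forall>\<alpha>\<in>A0. \<alpha> \<noteq> {}"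
  shows "card A0 \<le> size T + 2 * card {\<alpha>\<in>A0. \<alpha> \<inter> P \<noteq> {}}"
proof -
  have Ib: "\<forall>\<alpha>\<in>A0. red \<alpha> \<noteq> {} \<and> (\<forall>\<beta>\<in>A0. red \<beta> = red \<alpha> \<longrightarrow> \<beta> = \<alpha>) \<longrightarrow> red \<alpha> \<in> lhs ` set_mset T"
    using I unfolding alginv_def by (elim conjE) assumption
  have If: "\<forall>\<alpha>\<in>A0. symdiff \<alpha> (red \<alpha>) \<in> W"
    using I unfolding alginv_def by (elim conjE) assumption
  have Ig: "\<forall>w\<in>W. w \<noteq> {} \<longrightarrow> w \<inter> P \<noteq> {}"
    using I unfolding alginv_def by (elim conjE) assumption
  have Ih: "\<forall>x\<in>W. \<forall>y\<in>W. symdiff x y \<in> W"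
    using I unfolding alginv_def by (elim conjE) assumption
  have C: "\<alpha> = \<beta>" if "\<alpha> \<in> A0" "\<beta> \<in> A0" "red \<alpha> = red \<beta>" "\<alpha> \<inter> P = \<beta> \<inter> P" for \<alpha> \<beta>
  proof -
    have "symdiff (symdiff \<alpha> (red \<alpha>)) (symdiff \<beta> (red \<beta>)) \<in> W" using If Ih that(1,2) by blast
    moreover have "symdiff (symdiff \<alpha> (red \<alpha>)) (symdiff \<beta> (red \<beta>)) = symdiff \<alpha> \<beta>"
      using that(3) by (auto simp: symdiff_def)
    ultimately have "symdiff \<alpha> \<beta> \<in> W" by simp
    moreover have "symdiff \<alpha> \<beta> \<inter> P = {}" using that(4) by (auto simp: symdiff_def)
    ultimately have "symdiff \<alpha> \<beta> = {}" using Ig by blast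
    then show ?thesis by (auto simp: symdiff_def)
  qed
  have D: "\<alpha> \<inter> P \<noteq> {}" if "\<alpha> \<in> A0" "red \<alpha> = {}" for \<alpha>
  proof -
    have "symdiff \<alpha> (red \<alpha>) = \<alpha>" using that(2) by (simp add: symdiff_def)
    hence "\<alpha> \<in> W" using If that(1) by metis
    thus ?thesis using Ig ne that(1) by blast
  qed
  define good where "good = {\<alpha>\<in>A0. red \<alpha> \<noteq> {} \<and> (\<forall>\<beta>\<in>A0. red \<beta> = red \<alpha> \<longrightarrow> \<beta> = \<alpha>)}"
  define Q where "Q = {\<alpha>\<in>A0. \<alpha> \<inter> P \<noteq> {}}"
  define bad where "bad = A0 - good"
  define F where "F = bad - Q"
  have finQ: "finite Q" unfolding Q_def using fin by simp
  have finb: "finite bad" unfolding bad_def using fin by simp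
  have fing: "finite good" unfolding good_def using fin by simp
  have "inj_on red good"
  proof (rule inj_onI)
    fix x y assume xy: "x \<in> good" "y \<in> good" "red x = red y"
    have "\<forall>\<beta>\<in>A0. red \<beta> = red y \<longrightarrow> \<beta> = y" "x \<in> A0" using xy(1,2) unfolding good_def by simp_all
    thus "x = y" using xy(3) by blast
  qed
  hence "card good = card (red ` good)" by (simp add: card_image)
  also have "\<dots> \<le> card (lhs ` set_mset T)"
  proof (rule card_mono)
    show "red ` good \<subseteq> lhs ` set_mset T"
    proof
      fix y assume "y \<in> red ` good"
      then obtain \<alpha> where a: "\<alpha> \<in> good" "y = red \<alpha>" by blast
      have "\<alpha> \<in> A0" "red \<alpha> \<noteq> {} \<and> (\<forall>\<beta>\<in>A0. red \<beta> = red \<alpha> \<longrightarrow> \<beta> = \<alpha>)"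
        using a(1) unfolding good_def by simp_all
      thus "y \<in> lhs ` set_mset T" using Ib a(2) by blast
    qed
  qed simp
  also have "\<dots> \<le> card (set_mset T)" by (rule card_image_le) simp
  also have "\<dots> \<le> size T" by (rule card_set_mset_le)
  finally have cg: "card good \<le> size T" .
  have ex: "\<exists>\<beta>. \<beta> \<in> A0 \<and> \<beta> \<noteq> \<alpha> \<and> red \<beta> = red \<alpha>" if "\<alpha> \<in> F" for \<alpha>
  proof -
    have a: "\<alpha> \<in> A0" "\<alpha> \<notin> good" "\<alpha> \<inter> P = {}" using that unfolding F_def bad_def Q_def by auto
    have "red \<alpha> \<noteq> {}" using D a by blast
    then show ?thesis using a unfolding good_def by blast
  qed
  define f where "f = (\<lambda>\<alpha>. SOME \<beta>. \<beta> \<in> A0 \<and> \<beta> \<noteq> \<alpha> \<and> red \<beta> = red \<alpha>)"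
  have fP: "f \<alpha> \<in> A0 \<and> f \<alpha> \<noteq> \<alpha> \<and> red (f \<alpha>) = red \<alpha>" if "\<alpha> \<in> F" for \<alpha>
    unfolding f_def using someI_ex[OF ex[OF that]] .
  have FA: "\<alpha> \<in> A0 \<and> \<alpha> \<inter> P = {}" if "\<alpha> \<in> F" for \<alpha> using that unfolding F_def bad_def Q_def by auto
  have fQ: "f ` F \<subseteq> Q"
  proof
    fix y assume "y \<in> f ` F"
    then obtain \<alpha> where a: "\<alpha> \<in> F" "y = f \<alpha>" by blast
    have "f \<alpha> \<inter> P \<noteq> {}"
    proof
      assume "f \<alpha> \<inter> P = {}"
      hence "f \<alpha> = \<alpha>" using C[of "f \<alpha>" \<alpha>] fP[OF a(1)] FA[OF a(1)] by simp
      thus False using fP[OF a(1)] by simp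
    qed
    thus "y \<in> Q" using fP[OF a(1)] a(2) unfolding Q_def by simp
  qed
  have "inj_on f F"
  proof (rule inj_onI)
    fix x y assume xy: "x \<in> F" "y \<in> F" "f x = f y"
    have "red x = red y" using fP[OF xy(1)] fP[OF xy(2)] xy(3) by metis
    thus "x = y" using C[of x y] FA[OF xy(1)] FA[OF xy(2)] by simp
  qed
  hence cF: "card F \<le> card Q" using card_inj_on_le[OF _ fQ finQ] by blast
  have "bad \<subseteq> (bad \<inter> Q) \<union> F" unfolding F_def by blast
  hence "card bad \<le> card ((bad \<inter> Q) \<union> F)" by (rule card_mono[rotated]) (simp add: F_def finb)
  also have "\<dots> \<le> card (bad \<inter> Q) + card F" by (rule card_Un_le)
  also have "card (bad \<inter> Q) \<le> card Q" by (rule card_mono[OF finQ]) blast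
  finally have cb: "card bad \<le> 2 * card Q" using cF by linarith
  have gA: "good \<subseteq> A0" unfolding good_def by blast
  have "card bad = card A0 - card good" unfolding bad_def by (rule card_Diff_subset[OF fing gA])
  moreover have "card good \<le> card A0" by (rule card_mono[OF fin gA])
  ultimately have "card A0 = card good + card bad" by linarith
  thus ?thesis using cg cb unfolding Q_def by linarith
qed

lemma card_Q:
  assumes "finite P"
  shows "card {\<alpha>\<in>lhs ` set_mset S. \<alpha> \<inter> P \<noteq> {}} \<le> card P * rho S"
proof -
  define B where "B = (\<lambda>p. lhs ` set_mset (filter_mset (\<lambda>e. p \<in> lhs e) S))"
  have "{\<alpha>\<in>lhs ` set_mset S. \<alpha> \<inter> P \<noteq> {}} \<subseteq> (\<Union>p\<in>P. B p)" unfolding B_def by auto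
  hence "card {\<alpha>\<in>lhs ` set_mset S. \<alpha> \<inter> P \<noteq> {}} \<le> card (\<Union>p\<in>P. B p)"
    by (rule card_mono[rotated]) (use assms in \<open>simp add: B_def\<close>)
  also have "\<dots> \<le> (\<Sum>p\<in>P. card (B p))" by (rule card_UN_le[OF assms])
  also have "\<dots> \<le> (\<Sum>p\<in>P. rho S)"
  proof (rule sum_mono)
    fix p assume "p \<in> P"
    have "card (B p) \<le> card (set_mset (filter_mset (\<lambda>e. p \<in> lhs e) S))"
      unfolding B_def by (rule card_image_le) simp
    also have "\<dots> \<le> size (filter_mset (\<lambda>e. p \<in> lhs e) S)" by (rule card_set_mset_le)
    also have "\<dots> \<le> rho S" unfolding rho_def
    proof (rule Max_ge)
      show "finite (range (\<lambda>i. size (filter_mset (\<lambda>e. i \<in> lhs e) S)))"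
        by (rule finite_subset[of _ "{..size S}"]) auto
    qed simp
    finally show "card (B p) \<le> rho S" .
  qed
  also have "\<dots> = card P * rho S" by simp
  finally show ?thesis .
qed

theorem mainTheorem6:
  fixes S :: "equation multiset" and m k :: nat
  assumes "is_instance S"
    and "distinct_lhs S"
    and "size S = m"
  shows "(\<forall>T. (alg_step ^^ (k - 1)) S T \<longrightarrow> m - size T \<le> 2 * rho S * (k - 1))
       \<and> (2 * rho S * (k - 1) < m \<longrightarrow>
           (\<forall>j < k. \<forall>T. (alg_step ^^ j) S T \<longrightarrow> T \<noteq> {#} \<and> (\<exists>T'. alg_step T T')))"
proof -
  define A0 where "A0 = lhs ` set_mset S"
  have mA: "m = card A0"
  proof -
    have "\<forall>x. count (image_mset lhs S) x \<le> 1" using assms(2) unfolding distinct_lhs_def .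
    hence "size (image_mset lhs S) = card (set_mset (image_mset lhs S))" by (rule size_distinct)
    thus ?thesis using assms(3) unfolding A0_def by simp
  qed
  have ne: "\<forall>\<alpha>\<in>A0. \<alpha> \<noteq> {}" using assms(1) unfolding A0_def is_instance_def by auto
  have fin: "finite A0" unfolding A0_def by simp
  have bound: "m - size T \<le> 2 * rho S * j" if r0: "(alg_step ^^ j) S T" for j T
  proof -
    obtain red P W where I: "alginv A0 T red P W" "card P \<le> j"
      using inv_iter[OF r0 assms(1,2)] unfolding A0_def by blast
    have finP: "finite P" using I(1) unfolding alginv_def by (elim conjE) assumption
    have "m \<le> size T + 2 * card {\<alpha>\<in>A0. \<alpha> \<inter> P \<noteq> {}}" using count_bound[OF I(1) fin ne] mA by simp
    also have "card {\<alpha>\<in>A0. \<alpha> \<inter> P \<noteq> {}} \<le> card P * rho S" using card_Q[OF finP, of S] unfolding A0_def .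
    also have "card P * rho S \<le> j * rho S" using I(2) by simp
    finally show ?thesis by (simp add: algebra_simps)
  qed
  have part2: "T \<noteq> {#} \<and> (\<exists>T'. alg_step T T')"
    if lt: "2 * rho S * (k - 1) < m" and j: "j < k" and r: "(alg_step ^^ j) S T" for j T
  proof -
    have "j \<le> k - 1" using j by linarith
    hence "2 * rho S * j \<le> 2 * rho S * (k - 1)" by (rule mult_le_mono2)
    hence "size T > 0" using bound[OF r] lt by linarith
    hence Tne: "T \<noteq> {#}" by auto
    then obtain e where e: "e \<in># T" by (meson multiset_nonemptyE)
    obtain red P W where I: "alginv A0 T red P W" "card P \<le> j"
      using inv_iter[OF r assms(1,2)] unfolding A0_def by blast
    have Ia: "\<forall>e\<in>#T. lhs e \<in> red ` A0 \<and> lhs e \<noteq> {}" using I(1) unfolding alginv_def by (elim conjE) assumption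
    have "lhs e \<noteq> {}" using Ia e by blast
    then obtain l where l: "l \<in> lhs e" by blast
    obtain T' where "combine_exh
        (image_mset (\<lambda>x. if l \<in> lhs x then (symdiff (lhs e) (lhs x), rhs e \<noteq> rhs x, wt x) else x)
           (T - {#e#})) T'" using combine_exh_exists by blast
    hence "alg_step T T'" unfolding alg_step_def
      by (intro exI[of _ l] exI[of _ e] conjI e l)
    thus ?thesis using Tne by blast
  qed
  show ?thesis using bound part2 by blast
qed

end
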